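(* Let $n\ge 1$, $s\in(0,1)$, let $a$ be a spectral measure on $\mathbb S^{n-1}$ (as in the context), let $\Omega\subset\mathbb R^n$ be open and let $u\in L^\infty(\mathbb R^n)$ be continuous in $\overline\Omega$. Then $u$ satisfies the asymptotic expansion $$u(x)=\mathscr M^s_r u(x)+\mathcal O(r^2)\qquad\text{as } r\to0$$ for all $x\in\Omega$ in the viscosity sense if and only if $\mathcal L u=0$ in $\Omega$ in the viscosity sense.
   Context: A spectral measure is a non-negative finite Borel measure $a$ on the unit sphere $\mathbb S^{n-1}\subset\mathbb R^n$ with $0<\int_{\mathbb S^{n-1}}da\le\Lambda$ for some $\Lambda>0$. For $u:\mathbb R^n\to\mathbb R$ set $\delta(u,x,y)=2u(x)-u(x-y)-u(x+y)$ and $$\mathcal L u(x)=\int_0^\infty d\rho\int_{\mathbb S^{n-1}}da(\omega)\,\frac{\delta(u,x,\rho\omega)}{\rho^{1+2s}},$$ $$\mathscr M^s_r u(x)=c(n,s,a)\,r^{2s}\int_r^\infty d\rho\int_{\mathbb S^{n-1}}da(\omega)\,\frac{u(x+\rho\omega)+u(x-\rho\omega)}{(\rho^2-r^2)^s\rho},\qquad c(n,s,a)=\frac{\sin\pi s}{\pi}\Big(\int_{\mathbb S^{n-1}}da\Big)^{-1}.$$ Touching functions: for $x\in\Omega$, a neighborhood $U\subset\Omega$ of $x$ and $\varphi\in C^2(\overline U)$, let $v=\varphi$ in $U$ and $v=u$ in $\mathbb R^n\setminus U$. Viscosity solution: $u\in L^\infty(\mathbb R^n)$ lower (resp. upper)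 semicontinuous in $\overline\Omega$ is a viscosity supersolution (resp. subsolution) of $\mathcal Lu=0$ if for every $x\in\Omega$, every neighborhood $U\subset\Omega$ of $x$ and every $\varphi\in C^2(\overline U)$ with $\varphi(x)=u(x)$ and $\varphi(y)<u(y)$ (resp. $\varphi(y)>u(y)$) for $y\in U\setminus\{x\}$, the function $v$ above satisfies $\mathcal Lv(x)\ge0$ (resp. $\le0$). A viscosity solution is a continuous function that is both. Mean value in viscosity sense: $u$ (lower, resp. upper, semicontinuous in $\overline\Omega$, bounded) satisfies $u(x)=\mathscr M_r^s u(x)+\mathcal O(r^2)$ in the viscosity sense at $x$ from above/below if for every neighborhood $U\subset\Omega$ of $x$ and every $\varphi\in C^2(\overline U)$ with $\varphi(x)=u(x)$ and $\varphi<u$ (resp. $\varphi>u$) on $U\setminus\{x\}$, the function $v$ above satisfies $v(x)\ge \mathscr M_r^s v(x)+\mathcal O(r^2)$ (resp. $v(x)\le\mathscr M^s_r v(x)+\mathcal O(r^2)$) as $r\to0$; the expansion holds in the viscosity sense if both requirements hold. *)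

theory Defs
  imports "HOL-Analysis.Analysis"
begin

definition spectral_measure :: "(real^'n) measure \<Rightarrow> bool" where
  "spectral_measure a \<longleftrightarrow> finite_measure a
     \<and> sets a = sets (restrict_space borel (sphere (0::real^'n) 1))
     \<and> 0 < measure a (space a)"

definition delta :: "(real^'n \<Rightarrow> real) \<Rightarrow> real^'n \<Rightarrow> real^'n \<Rightarrow> real" where
  "delta u x y = 2 * u x - u (x - y) - u (x + y)"

definition Lop :: "(real^'n) measure \<Rightarrow> real \<Rightarrow> (real^'n \<Rightarrow> real) \<Rightarrow> real^'n \<Rightarrow> real" where
  "Lop a s u x = (LINT \<rho>:{0<..}|lborel. (LINT \<omega>|a. delta u x (\<rho> *\<^sub>R \<omega>) / \<rho> powr (1 + 2 * s)))"

definition cnst :: "(real^'n) measure \<Rightarrow> real \<Rightarrow> real" where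
  "cnst a s = sin (pi * s) / pi / measure a (space a)"

definition Mop :: "(real^'n) measure \<Rightarrow> real \<Rightarrow> real \<Rightarrow> (real^'n \<Rightarrow> real) \<Rightarrow> real^'n \<Rightarrow> real" where
  "Mop a s r u x = cnst a s * r powr (2 * s) *
     (LINT \<rho>:{r<..}|lborel. (LINT \<omega>|a.
        (u (x + \<rho> *\<^sub>R \<omega>) + u (x - \<rho> *\<^sub>R \<omega>)) / ((\<rho>\<^sup>2 - r\<^sup>2) powr s * \<rho>)))"

definition lsc_on :: "'a::topological_space set \<Rightarrow> ('a \<Rightarrow> real) \<Rightarrow> bool" where
  "lsc_on S u \<longleftrightarrow> (\<forall>y\<in>S. \<forall>t. t < u y \<longrightarrow> eventually (\<lambda>z. t < u z) (at y within S))"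

definition usc_on :: "'a::topological_space set \<Rightarrow> ('a \<Rightarrow> real) \<Rightarrow> bool" where
  "usc_on S u \<longleftrightarrow> (\<forall>y\<in>S. \<forall>t. u y < t \<longrightarrow> eventually (\<lambda>z. u z < t) (at y within S))"

definition C2_on :: "(real^'n) set \<Rightarrow> (real^'n \<Rightarrow> real) \<Rightarrow> bool" where
  "C2_on S \<phi> \<longleftrightarrow> (\<exists>D :: real^'n \<Rightarrow> ((real^'n) \<Rightarrow>\<^sub>L real).
      \<exists>D2 :: real^'n \<Rightarrow> ((real^'n) \<Rightarrow>\<^sub>L ((real^'n) \<Rightarrow>\<^sub>L real)).
      (\<forall>y\<in>S. (\<phi> has_derivative blinfun_apply (D y)) (at y within S)
            \<and> (D has_derivative blinfun_apply (D2 y)) (at y within S))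
      \<and> continuous_on S D2)"

(* bounded measurable function (u in L^infinity, taken pointwise) *)
definition Linfty :: "(real^'n \<Rightarrow> real) \<Rightarrow> bool" where
  "Linfty u \<longleftrightarrow> u \<in> borel_measurable borel \<and> bounded (range u)"

definition test_data :: "(real^'n) set \<Rightarrow> real^'n \<Rightarrow> (real^'n) set \<Rightarrow> (real^'n \<Rightarrow> real) \<Rightarrow> bool" where
  "test_data \<Omega> x U \<phi> \<longleftrightarrow> open U \<and> bounded U \<and> x \<in> U \<and> U \<subseteq> \<Omega> \<and> C2_on (closure U) \<phi>"

definition touch :: "(real^'n) set \<Rightarrow> (real^'n \<Rightarrow> real) \<Rightarrow> (real^'n \<Rightarrow> real) \<Rightarrow> real^'n \<Rightarrow> real" where
  "touch U \<phi> u = (\<lambda>y. if y \<in> U then \<phi> y else u y)"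

definition visc_super :: "(real^'n) measure \<Rightarrow> real \<Rightarrow> (real^'n) set \<Rightarrow> (real^'n \<Rightarrow> real) \<Rightarrow> bool" where
  "visc_super a s \<Omega> u \<longleftrightarrow> Linfty u \<and> lsc_on (closure \<Omega>) u \<and>
     (\<forall>x\<in>\<Omega>. \<forall>U \<phi>. test_data \<Omega> x U \<phi> \<and> \<phi> x = u x \<and> (\<forall>y\<in>U - {x}. \<phi> y < u y)
        \<longrightarrow> Lop a s (touch U \<phi> u) x \<ge> 0)"

definition visc_sub :: "(real^'n) measure \<Rightarrow> real \<Rightarrow> (real^'n) set \<Rightarrow> (real^'n \<Rightarrow> real) \<Rightarrow> bool" where
  "visc_sub a s \<Omega> u \<longleftrightarrow> Linfty u \<and> usc_on (closure \<Omega>) u \<and>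
     (\<forall>x\<in>\<Omega>. \<forall>U \<phi>. test_data \<Omega> x U \<phi> \<and> \<phi> x = u x \<and> (\<forall>y\<in>U - {x}. \<phi> y > u y)
        \<longrightarrow> Lop a s (touch U \<phi> u) x \<le> 0)"

definition visc_solution :: "(real^'n) measure \<Rightarrow> real \<Rightarrow> (real^'n) set \<Rightarrow> (real^'n \<Rightarrow> real) \<Rightarrow> bool" where
  "visc_solution a s \<Omega> u \<longleftrightarrow> continuous_on (closure \<Omega>) u \<and> visc_super a s \<Omega> u \<and> visc_sub a s \<Omega> u"

definition mv_above :: "(real^'n) measure \<Rightarrow> real \<Rightarrow> (real^'n) set \<Rightarrow> (real^'n \<Rightarrow> real) \<Rightarrow> real^'n \<Rightarrow> bool" where
  "mv_above a s \<Omega> u x \<longleftrightarrow> Linfty u \<and> lsc_on (closure \<Omega>) u \<and>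
     (\<forall>U \<phi>. test_data \<Omega> x U \<phi> \<and> \<phi> x = u x \<and> (\<forall>y\<in>U - {x}. \<phi> y < u y)
        \<longrightarrow> (\<exists>C. eventually (\<lambda>r. touch U \<phi> u x \<ge> Mop a s r (touch U \<phi> u) x - C * r\<^sup>2) (at_right 0)))"

definition mv_below :: "(real^'n) measure \<Rightarrow> real \<Rightarrow> (real^'n) set \<Rightarrow> (real^'n \<Rightarrow> real) \<Rightarrow> real^'n \<Rightarrow> bool" where
  "mv_below a s \<Omega> u x \<longleftrightarrow> Linfty u \<and> usc_on (closure \<Omega>) u \<and>
     (\<forall>U \<phi>. test_data \<Omega> x U \<phi> \<and> \<phi> x = u x \<and> (\<forall>y\<in>U - {x}. \<phi> y > u y)
        \<longrightarrow> (\<exists>C. eventually (\<lambda>r. touch U \<phi> u x \<le> Mop a s r (touch U \<phi> u) x + C * r\<^sup>2) (at_right 0)))"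

definition mv_viscosity :: "(real^'n) measure \<Rightarrow> real \<Rightarrow> (real^'n) set \<Rightarrow> (real^'n \<Rightarrow> real) \<Rightarrow> real^'n \<Rightarrow> bool" where
  "mv_viscosity a s \<Omega> u x \<longleftrightarrow> mv_above a s \<Omega> u x \<and> mv_below a s \<Omega> u x"

end

theory Submission
  imports Defs "HOL-Real_Asymp.Real_Asymp"
begin

lemma K2:
  fixes r s :: real assumes r: "0 < r" and s: "0 < s" "s < 1"
  shows "set_integrable lborel {r<..} (\<lambda>\<rho>. \<rho>\<^sup>2 * (1 / ((\<rho>\<^sup>2 - r\<^sup>2) powr s * \<rho>) - 1 / \<rho> powr (1 + 2 * s)))"
    "(LINT \<rho>:{r<..}|lborel. \<rho>\<^sup>2 * (1 / ((\<rho>\<^sup>2 - r\<^sup>2) powr s * \<rho>) - 1 / \<rho> powr (1 + 2 * s)))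
       = r powr (2 - 2 * s) / (2 * (1 - s))"
proof -
  define f where "f \<rho> = \<rho>\<^sup>2 * (1 / ((\<rho>\<^sup>2 - r\<^sup>2) powr s * \<rho>) - 1 / \<rho> powr (1 + 2 * s))" for \<rho>
  define F where "F \<rho> = ((\<rho>\<^sup>2 - r\<^sup>2) powr (1 - s) - (\<rho>\<^sup>2) powr (1 - s)) / (2 * (1 - s))" for \<rho>
  have deriv: "(F has_real_derivative f x) (at x)" if "r < x" for x
  proof -
    have x0: "x > 0" "x\<^sup>2 - r\<^sup>2 > 0" using that r by (auto simp: power2_eq_square mult_strict_mono)
    have "(F has_real_derivative
       (((1 - s) * (x\<^sup>2 - r\<^sup>2) powr (1 - s - 1) * (2 * x) - (1 - s) * (x\<^sup>2) powr (1 - s - 1) * (2 * x)) / (2 * (1 - s)))) (at x)"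
      unfolding F_def using x0 s
      by (auto intro!: derivative_eq_intros)
    moreover have "((1 - s) * (x\<^sup>2 - r\<^sup>2) powr (1 - s - 1) * (2 * x) - (1 - s) * (x\<^sup>2) powr (1 - s - 1) * (2 * x)) / (2 * (1 - s))
       = ((x\<^sup>2 - r\<^sup>2) powr (- s) - (x\<^sup>2) powr (- s)) * x"
      using s by (simp add: field_simps)
    moreover have "((x\<^sup>2 - r\<^sup>2) powr (- s) - (x\<^sup>2) powr (- s)) * x = f x"
    proof -
      have a: "(x\<^sup>2 - r\<^sup>2) powr (- s) = 1 / (x\<^sup>2 - r\<^sup>2) powr s"
        using x0 by (simp add: powr_minus divide_inverse)
      have b: "(x\<^sup>2) powr (- s) * x = x\<^sup>2 / x powr (1 + 2 * s)"
      proof -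
        have "(x\<^sup>2) powr (- s) = x powr (- 2 * s)"
        proof -
          have "(x\<^sup>2) = x powr 2" using x0 by (simp add: powr_realpow)
          hence "(x\<^sup>2) powr (- s) = (x powr 2) powr (- s)" by simp
          also have "\<dots> = x powr (- 2 * s)" by (simp add: powr_powr)
          finally show ?thesis .
        qed
        moreover have "x powr (1 + 2 * s) = x * x powr (2 * s)" using x0 by (simp add: powr_add)
        moreover have "x powr (- 2 * s) = 1 / x powr (2 * s)" using x0 by (simp add: powr_minus divide_inverse)
        ultimately show ?thesis using x0 by (simp add: field_simps power2_eq_square)
      qed
      have c: "(x\<^sup>2 - r\<^sup>2) powr s > 0" using x0 by simp
      have "((x\<^sup>2 - r\<^sup>2) powr (- s) - (x\<^sup>2) powr (- s)) * x = x / (x\<^sup>2 - r\<^sup>2) powr s - x\<^sup>2 / x powr (1 + 2 * s)"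
        by (simp add: left_diff_distrib a b)
      also have "\<dots> = f x" unfolding f_def using x0 c by (simp add: field_simps power2_eq_square)
      finally show ?thesis .
    qed
    ultimately show ?thesis by simp
  qed
  have cont: "isCont f x" if "r < x" for x
  proof -
    have x0: "x > 0" "x\<^sup>2 - r\<^sup>2 > 0" using that r by (auto simp: power2_eq_square mult_strict_mono)
    show ?thesis unfolding f_def using x0 by (auto intro!: continuous_intros)
  qed
  have nonneg: "0 \<le> f x" if "r < x" for x
  proof -
    have x0: "x > 0" "x\<^sup>2 - r\<^sup>2 > 0" using that r by (auto simp: power2_eq_square mult_strict_mono)
    have "(x\<^sup>2 - r\<^sup>2) powr s \<le> (x\<^sup>2) powr s" using x0 s by (intro powr_mono2) auto
    also have "(x\<^sup>2) powr s = x powr (2 * s)"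
    proof -
      have "(x\<^sup>2) = x powr 2" using x0 by (simp add: powr_realpow)
      thus ?thesis by (simp add: powr_powr)
    qed
    finally have "(x\<^sup>2 - r\<^sup>2) powr s * x \<le> x powr (1 + 2 * s)"
      using x0 by (simp add: powr_add mult.commute)
    hence "1 / x powr (1 + 2 * s) \<le> 1 / ((x\<^sup>2 - r\<^sup>2) powr s * x)"
      using x0 by (intro divide_left_mono) auto
    thus ?thesis unfolding f_def by simp
  qed
  have limA: "((F \<circ> real_of_ereal) \<longlongrightarrow> - (r powr (2 - 2 * s) / (2 * (1 - s)))) (at_right (ereal r))"
  proof -
    have e: "(r\<^sup>2) powr (1 - s) = r powr (2 - 2 * s)"
    proof -
      have "(r\<^sup>2) = r powr 2" using r by (simp add: powr_realpow)
      thus ?thesis by (simp add: powr_powr algebra_simps)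
    qed
    have "(F \<longlongrightarrow> (0 - (r\<^sup>2) powr (1 - s)) / (2 * (1 - s))) (at_right r)"
      unfolding F_def using r s apply real_asymp by (simp add: field_simps)
    thus ?thesis unfolding ereal_tendsto_simps e by simp
  qed
  have limB: "((F \<circ> real_of_ereal) \<longlongrightarrow> 0) (at_left \<infinity>)"
  proof -
    have "(F \<longlongrightarrow> 0) at_top"
      unfolding F_def using r s by real_asymp
    thus ?thesis unfolding ereal_tendsto_simps by simp
  qed
  note ftc = interval_integral_FTC_nonneg[of "ereal r" \<infinity> F f, OF _ _ _ _ limA limB]
  show "set_integrable lborel {r<..} f" "(LINT \<rho>:{r<..}|lborel. f \<rho>) = r powr (2 - 2 * s) / (2 * (1 - s))"
    using ftc deriv cont nonneg by (auto simp: interval_integral_to_infinity_eq)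
qed

lemma K3:
  fixes r s :: real assumes r: "0 < r" and s: "0 < s" "s < 1"
  shows "set_integrable lborel {0<..r} (\<lambda>\<rho>. \<rho>\<^sup>2 * (1 / \<rho> powr (1 + 2 * s)))"
    "(LINT \<rho>:{0<..r}|lborel. \<rho>\<^sup>2 * (1 / \<rho> powr (1 + 2 * s))) = r powr (2 - 2 * s) / (2 - 2 * s)"
proof -
  define f where "f \<rho> = \<rho>\<^sup>2 * (1 / \<rho> powr (1 + 2 * s))" for \<rho> :: real
  define F where "F \<rho> = \<rho> powr (2 - 2 * s) / (2 - 2 * s)" for \<rho> :: real
  have feq: "f x = x powr (1 - 2 * s)" if "0 < x" for x
  proof -
    have a: "x powr (1 + 2 * s) = x * x powr (2 * s)" using that by (simp add: powr_add)
    have b: "x powr (1 - 2 * s) = x / x powr (2 * s)" using that by (simp add: powr_diff)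
    show ?thesis unfolding f_def a b using that by (simp add: field_simps power2_eq_square)
  qed
  have deriv: "(F has_real_derivative f x) (at x)" if "0 < x" for x
  proof -
    have "(F has_real_derivative ((2 - 2 * s) * x powr (2 - 2 * s - 1) / (2 - 2 * s))) (at x)"
      unfolding F_def using that s by (auto intro!: derivative_eq_intros)
    moreover have "(2 - 2 * s) * x powr (2 - 2 * s - 1) / (2 - 2 * s) = f x"
      using feq[OF that] s by (simp add: field_simps)
    ultimately show ?thesis by simp
  qed
  have cont: "isCont f x" if "0 < x" for x
    unfolding f_def using that by (auto intro!: continuous_intros)
  have nonneg: "0 \<le> f x" for x unfolding f_def by simp
  have limA: "((F \<circ> real_of_ereal) \<longlongrightarrow> 0) (at_right (ereal 0))"
  proof -
    have "(F \<longlongrightarrow> 0) (at_right 0)" unfolding F_def using s by real_asymp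
    thus ?thesis unfolding ereal_tendsto_simps by simp
  qed
  have limB: "((F \<circ> real_of_ereal) \<longlongrightarrow> F r) (at_left (ereal r))"
  proof -
    have "(F \<longlongrightarrow> F r) (at_left r)" unfolding F_def using s r
      by (intro tendsto_intros) auto
    thus ?thesis unfolding ereal_tendsto_simps by simp
  qed
  note ftc = interval_integral_FTC_nonneg[of "ereal 0" "ereal r" F f, OF _ _ _ _ limA limB]
  have I1: "set_integrable lborel {0<..<r} f" and I2: "(LINT \<rho>:{0<..<r}|lborel. f \<rho>) = F r"
    using ftc deriv cont nonneg r by (auto simp: interval_integral_Ioo)
  have meas: "f \<in> borel_measurable borel" unfolding f_def by measurable
  have ae: "AE x in lborel. indicator {0<..r} x *\<^sub>R f x = indicator {0<..<r} x *\<^sub>R f x"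
    using AE_lborel_singleton[of r] by eventually_elim (auto simp: indicator_def)
  have meas2: "(\<lambda>x. indicator {0<..r} x *\<^sub>R f x) \<in> borel_measurable lborel"
    using meas by measurable
  have ae2: "AE x in lborel. indicator {0<..<r} x *\<^sub>R f x = indicator {0<..r} x *\<^sub>R f x"
    using ae by eventually_elim metis
  show "set_integrable lborel {0<..r} f"
    using integrable_cong_AE_imp[OF I1[unfolded set_integrable_def] meas2 ae2] unfolding set_integrable_def .
  show "(LINT \<rho>:{0<..r}|lborel. f \<rho>) = r powr (2 - 2 * s) / (2 - 2 * s)"
    using I2 unfolding set_lebesgue_integral_def F_def
    by (subst integral_cong_AE[OF meas2 _ ae]) (use meas in auto)
qed

lemma Beta_reflect_real:
  fixes s :: real assumes "0 < s" "s < 1"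
  shows "Beta (1 - s) s = pi / sin (pi * s)"
proof -
  have "Gamma (complex_of_real s) * Gamma (1 - complex_of_real s) = of_real pi / sin (of_real pi * of_real s)"
    by (rule Gamma_reflection_complex)
  hence "complex_of_real (Gamma s * Gamma (1 - s)) = complex_of_real (pi / sin (pi * s))"
    by (simp add: Gamma_complex_of_real[symmetric] sin_of_real[symmetric])
  hence "Gamma s * Gamma (1 - s) = pi / sin (pi * s)" by (simp only: of_real_eq_iff)
  thus ?thesis by (simp add: Beta_altdef mult.commute)
qed

lemma Beta_set_integral:
  fixes a b :: real assumes "0 < a" "0 < b"
  shows "set_integrable lborel {0<..<1} (\<lambda>t. t powr (a - 1) * (1 - t) powr (b - 1))"
    "(LINT t:{0<..<1}|lborel. t powr (a - 1) * (1 - t) powr (b - 1)) = Beta a b"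
proof -
  have i: "set_integrable lborel {0..1} (\<lambda>t. t powr (a - 1) * (1 - t) powr (b - 1))"
    by (rule integrable_Beta[OF assms])
  show i2: "set_integrable lborel {0<..<1} (\<lambda>t. t powr (a - 1) * (1 - t) powr (b - 1))"
    by (rule set_integrable_subset[OF i]) auto
  have "(LINT t:{0<..<1}|lborel. t powr (a - 1) * (1 - t) powr (b - 1))
      = integral {0<..<1} (\<lambda>t. t powr (a - 1) * (1 - t) powr (b - 1))"
    by (rule set_borel_integral_eq_integral(2)[OF i2])
  also have "\<dots> = integral {0..1} (\<lambda>t. t powr (a - 1) * (1 - t) powr (b - 1))"
    by (rule integral_open_interval_real[symmetric])
  also have "\<dots> = Beta a b" using has_integral_Beta_real[OF assms] by (rule integral_unique)
  finally show "(LINT t:{0<..<1}|lborel. t powr (a - 1) * (1 - t) powr (b - 1)) = Beta a b" .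
qed

lemma K1:
  fixes r s :: real assumes r: "0 < r" and s: "0 < s" "s < 1"
  shows "set_integrable lborel {r<..} (\<lambda>\<rho>. 1 / ((\<rho>\<^sup>2 - r\<^sup>2) powr s * \<rho>))"
    "(LINT \<rho>:{r<..}|lborel. 1 / ((\<rho>\<^sup>2 - r\<^sup>2) powr s * \<rho>)) = r powr (- 2 * s) * pi / (2 * sin (pi * s))"
proof -
  define f where "f \<rho> = 1 / ((\<rho>\<^sup>2 - r\<^sup>2) powr s * \<rho>)" for \<rho>
  define g where "g u = r * (1 - u) powr (- (1 / 2))" for u :: real
  define g' where "g' u = r / 2 * (1 - u) powr (- (3 / 2))" for u :: real
  define C where "C = r powr (- 2 * s) / 2"
  have gr: "g u > r" if "0 < u" "u < 1" for u
  proof -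
    have "(1 - u) powr (- (1 / 2)) > 1"
      using powr_less_mono2_neg[of "- 1 / 2" "1 - u" 1] that by auto
    thus ?thesis unfolding g_def using r by simp
  qed
  have fg: "f (g u) * g' u = C * (u powr ((1 - s) - 1) * (1 - u) powr (s - 1))" if u: "0 < u" "u < 1" for u
  proof -
    define w where "w = 1 - u"
    have w: "0 < w" "w < 1" using u by (auto simp: w_def)
    have uw: "u = 1 - w" by (simp add: w_def)
    have g2: "(g u)\<^sup>2 = r\<^sup>2 / w"
    proof -
      have a1: "(w powr (- (1 / 2)))\<^sup>2 = w powr (- 1)"
        using w by (simp add: power2_eq_square powr_add[symmetric])
      have a2: "w powr (- 1) = 1 / w" using w powr_minus_divide[of w 1] by simp
      have "(g u)\<^sup>2 = r\<^sup>2 * (w powr (- (1 / 2)))\<^sup>2" unfolding g_def w_def by (simp add: power_mult_distrib)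
      thus ?thesis unfolding a1 a2 by simp
    qed
    have d: "(g u)\<^sup>2 - r\<^sup>2 = r\<^sup>2 * u / w"
      unfolding g2 using w by (simp add: field_simps w_def)
    have e1: "((g u)\<^sup>2 - r\<^sup>2) powr s = r powr (2 * s) * u powr s / w powr s"
    proof -
      have "(r\<^sup>2) powr s = r powr (2 * s)"
      proof -
        have "r\<^sup>2 = r powr 2" using r by (simp add: powr_realpow)
        thus ?thesis by (simp add: powr_powr)
      qed
      thus ?thesis unfolding d using r u w by (simp add: powr_mult powr_divide)
    qed
    have h1: "w powr (- (1 / 2)) = 1 / w powr (1 / 2)" by (rule powr_minus_divide)
    have h3: "w powr (- (3 / 2)) = 1 / (w * w powr (1 / 2))"
    proof -
      have "w powr (1 + 1 / 2) = w powr 1 * w powr (1 / 2)" by (rule powr_add)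
      hence "w powr (3 / 2) = w * w powr (1 / 2)" using w by simp
      thus ?thesis by (simp add: powr_minus_divide)
    qed
    have h4: "w powr (s - 1) = w powr s / w" using w by (simp add: powr_diff)
    have h5: "u powr ((1 - s) - 1) = 1 / u powr s" using powr_minus_divide[of u s] by simp
    have h6: "r powr (- 2 * s) = 1 / r powr (2 * s)" using powr_minus_divide[of r "2 * s"] by simp
    have pos: "w powr (1 / 2) > 0" "u powr s > 0" "r powr (2 * s) > 0" "w powr s > 0" using u w r by auto
    show ?thesis
      unfolding f_def e1 C_def h6 h5 w_def[symmetric] h4
      unfolding g_def g'_def w_def[symmetric] h1 h3
      using pos r by (simp add: field_simps)
  qed
  have deriv_g: "(g has_real_derivative g' x) (at x)" if "ereal 0 < ereal x" "ereal x < ereal 1" for x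
  proof -
    have x: "0 < x" "x < 1" using that by auto
    have "(g has_real_derivative r * ((- (1 / 2)) * (1 - x) powr (- (1 / 2) - 1) * (0 - 1))) (at x)"
      unfolding g_def using x by (auto intro!: derivative_eq_intros)
    moreover have "r * ((- (1 / 2)) * (1 - x) powr (- (1 / 2) - 1) * (0 - 1)) = g' x"
      unfolding g'_def by (simp add: algebra_simps)
    ultimately show ?thesis by simp
  qed
  have contf: "isCont f (g x)" if "ereal 0 < ereal x" "ereal x < ereal 1" for x
  proof -
    have gx: "g x > r" using gr that by auto
    hence "(g x)\<^sup>2 - r\<^sup>2 > 0" using r by (simp add: power_strict_mono)
    thus ?thesis unfolding f_def using gx r by (auto intro!: continuous_intros)
  qed
  have contg': "isCont g' x" if "ereal 0 < ereal x" "ereal x < ereal 1" for x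
    unfolding g'_def using that by (auto intro!: continuous_intros)
  have f_nonneg: "0 \<le> f (g x)" if "ereal 0 < ereal x" "ereal x < ereal 1" for x
  proof -
    have gx: "g x > r" using gr that by auto
    thus ?thesis unfolding f_def using r by simp
  qed
  have g'_nonneg: "0 \<le> g' x" for x unfolding g'_def using r by simp
  have A: "((ereal \<circ> g \<circ> real_of_ereal) \<longlongrightarrow> ereal r) (at_right (ereal 0))"
  proof -
    have "(g \<longlongrightarrow> r) (at_right 0)" unfolding g_def by real_asymp
    thus ?thesis unfolding ereal_tendsto_simps by simp
  qed
  have B: "((ereal \<circ> g \<circ> real_of_ereal) \<longlongrightarrow> \<infinity>) (at_left (ereal 1))"
  proof -
    have "filterlim g at_top (at_left 1)" unfolding g_def using r by real_asymp
    thus ?thesis unfolding ereal_tendsto_simps by simp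
  qed
  have Bi: "set_integrable lborel {0<..<1} (\<lambda>x. C * (x powr ((1 - s) - 1) * (1 - x) powr (s - 1)))"
    using Beta_set_integral(1)[of "1 - s" s] s by simp
  have ifg: "set_integrable lborel (einterval (ereal 0) (ereal 1)) (\<lambda>x. f (g x) * g' x)"
    using Bi by (subst set_integrable_cong[OF refl refl, where f' = "\<lambda>x. C * (x powr ((1 - s) - 1) * (1 - x) powr (s - 1))"])
      (auto simp: fg)
  note sub = interval_integral_substitution_nonneg[of "ereal 0" "ereal 1" g g' f, OF _ deriv_g contf contg' f_nonneg g'_nonneg A B ifg]
  have "(LINT \<rho>:{r<..}|lborel. f \<rho>) = (LINT x:{0<..<1}|lborel. C * (x powr ((1 - s) - 1) * (1 - x) powr (s - 1)))"
  proof -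
    have e: "(LINT x:{0<..<1}|lborel. f (g x) * g' x) = (LINT x:{0<..<1}|lborel. C * (x powr ((1 - s) - 1) * (1 - x) powr (s - 1)))"
      by (rule set_lebesgue_integral_cong) (auto simp: fg)
    show ?thesis using sub(2) unfolding e[symmetric] by (simp add: interval_integral_to_infinity_eq interval_integral_Ioo)
  qed
  also have "\<dots> = C * Beta (1 - s) s"
    using Beta_set_integral(2)[of "1 - s" s] s by simp
  also have "\<dots> = r powr (- 2 * s) * pi / (2 * sin (pi * s))"
    unfolding C_def Beta_reflect_real[OF s] by simp
  finally show "(LINT \<rho>:{r<..}|lborel. f \<rho>) = r powr (- 2 * s) * pi / (2 * sin (pi * s))" .
  show "set_integrable lborel {r<..} f" using sub(1) by simp
qed

lemma taylor_delta:
  fixes \<phi> :: "real^'n \<Rightarrow> real" and x :: "real^'n"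
  assumes C2: "C2_on T \<phi>" and e: "0 < e" and sub: "cball x e \<subseteq> interior T"
  shows "\<exists>M\<ge>0. \<forall>y. norm y \<le> e \<longrightarrow> \<bar>delta \<phi> x y\<bar> \<le> M * (norm y)\<^sup>2"
proof -
  from C2 obtain D :: "real^'n \<Rightarrow> ((real^'n) \<Rightarrow>\<^sub>L real)"
    and D2 :: "real^'n \<Rightarrow> ((real^'n) \<Rightarrow>\<^sub>L ((real^'n) \<Rightarrow>\<^sub>L real))"
    where DD: "\<And>y. y \<in> T \<Longrightarrow> (\<phi> has_derivative blinfun_apply (D y)) (at y within T)
            \<and> (D has_derivative blinfun_apply (D2 y)) (at y within T)"
      and cD2: "continuous_on T D2"
    unfolding C2_on_def by blast
  have subT: "cball x e \<subseteq> T" using sub interior_subset by blast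
  have Dphi: "(\<phi> has_derivative blinfun_apply (D p)) (at p)" if "p \<in> cball x e" for p
  proof -
    have "p \<in> T" "p \<in> interior T" using that sub subT by auto
    thus ?thesis using DD[of p] at_within_interior[of p T] by metis
  qed
  have DD2: "(D has_derivative blinfun_apply (D2 p)) (at p)" if "p \<in> cball x e" for p
  proof -
    have "p \<in> T" "p \<in> interior T" using that sub subT by auto
    thus ?thesis using DD[of p] at_within_interior[of p T] by metis
  qed
  have "compact (D2 ` cball x e)"
    by (rule compact_continuous_image) (use continuous_on_subset[OF cD2 subT] in auto)
  then obtain M where M: "\<And>p. p \<in> cball x e \<Longrightarrow> norm (D2 p) \<le> M"
    using compact_imp_bounded[of "D2 ` cball x e"] unfolding bounded_iff by (metis image_eqI)
  have M0: "M \<ge> 0" using M[of x] e by (meson centre_in_cball less_imp_le norm_ge_zero order_trans)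
  have Dlip: "norm (D p - D q) \<le> M * norm (p - q)" if "p \<in> cball x e" "q \<in> cball x e" for p q
  proof (rule differentiable_bound[where S = "cball x e" and f' = "\<lambda>p. blinfun_apply (D2 p)"])
    show "convex (cball x e)" by simp
    show "(D has_derivative blinfun_apply (D2 p)) (at p within cball x e)" if "p \<in> cball x e" for p
      using DD2[OF that] by (rule has_derivative_at_withinI)
    show "onorm (blinfun_apply (D2 p)) \<le> M" if "p \<in> cball x e" for p
      using M[OF that] by (simp add: norm_blinfun.rep_eq)
  qed (use that in auto)
  have main: "\<bar>delta \<phi> x y\<bar> \<le> (2 * M) * (norm y)\<^sup>2" if y: "norm y \<le> e" for y
  proof -
    define g where "g z = \<phi> (x + z) + \<phi> (x - z)" for z
    define S where "S = cball (0::real^'n) (norm y)"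
    have inS: "x + z \<in> cball x e" "x - z \<in> cball x e" if "z \<in> S" for z
      using that y unfolding S_def by (auto simp: dist_norm)
    have gd: "(g has_derivative (\<lambda>w. blinfun_apply (D (x + z) - D (x - z)) w)) (at z within S)" if "z \<in> S" for z
    proof -
      have a1: "((\<lambda>z. x + z) has_derivative (\<lambda>w. w)) (at z within S)"
        by (auto intro!: derivative_eq_intros)
      have a2: "((\<lambda>z. x - z) has_derivative (\<lambda>w. - w)) (at z within S)"
        by (auto intro!: derivative_eq_intros)
      have 1: "((\<lambda>z. \<phi> (x + z)) has_derivative (\<lambda>w. blinfun_apply (D (x + z)) w)) (at z within S)"
        using has_derivative_compose[OF a1, of \<phi> "blinfun_apply (D (x + z))"]
          Dphi[OF inS(1)[OF that]] by simp
      have 2: "((\<lambda>z. \<phi> (x - z)) has_derivative (\<lambda>w. blinfun_apply (D (x - z)) (- w))) (at z within S)"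
        using has_derivative_compose[OF a2, of \<phi> "blinfun_apply (D (x - z))"]
          Dphi[OF inS(2)[OF that]] by simp
      have "(g has_derivative (\<lambda>w. blinfun_apply (D (x + z)) w + blinfun_apply (D (x - z)) (- w))) (at z within S)"
        unfolding g_def by (rule has_derivative_add[OF 1 2])
      moreover have "(\<lambda>w. blinfun_apply (D (x + z)) w + blinfun_apply (D (x - z)) (- w)) = (\<lambda>w. blinfun_apply (D (x + z) - D (x - z)) w)"
        by (auto simp: blinfun.bilinear_simps)
      ultimately show ?thesis by simp
    qed
    have bnd: "onorm (\<lambda>w. blinfun_apply (D (x + z) - D (x - z)) w) \<le> 2 * M * norm y" if "z \<in> S" for z
    proof -
      have "onorm (\<lambda>w. blinfun_apply (D (x + z) - D (x - z)) w) = norm (D (x + z) - D (x - z))"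
        by (simp add: norm_blinfun.rep_eq)
      also have "\<dots> \<le> M * norm ((x + z) - (x - z))" by (rule Dlip[OF inS[OF that]])
      also have "norm ((x + z) - (x - z)) = 2 * norm z" by (simp add: scaleR_2[symmetric] del: scaleR_2)
      also have "M * (2 * norm z) \<le> M * (2 * norm y)" using that M0 unfolding S_def by (intro mult_left_mono) auto
      finally show ?thesis by simp
    qed
    have "norm (g y - g 0) \<le> (2 * M * norm y) * norm (y - 0)"
      by (rule differentiable_bound[OF _ gd bnd]) (auto simp: S_def)
    moreover have "delta \<phi> x y = - (g y - g 0)" unfolding delta_def g_def by simp
    ultimately show ?thesis by (simp add: power2_eq_square mult_ac)
  qed
  show ?thesis using main M0 by (intro exI[of _ "2 * M"]) auto
qed


lemma spectral_basic:
  assumes "spectral_measure (a :: (real^'n) measure)"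
  shows "finite_measure a" "space a = sphere 0 1" "0 < measure a (space a)"
    "\<And>h. h \<in> borel_measurable borel \<Longrightarrow> h \<in> borel_measurable a"
    "(\<lambda>\<omega>. \<omega>) \<in> measurable a borel"
proof -
  have s: "sets a = sets (restrict_space borel (sphere (0::real^'n) 1))"
    using assms unfolding spectral_measure_def by auto
  show "finite_measure a" "0 < measure a (space a)" using assms unfolding spectral_measure_def by auto
  show sp: "space a = sphere 0 1" using sets_eq_imp_space_eq[OF s] by (simp add: space_restrict_space)
  show "h \<in> borel_measurable a" if "h \<in> borel_measurable borel" for h :: "real^'n \<Rightarrow> 'b::topological_space"
    unfolding measurable_cong_sets[OF s refl] by (rule measurable_restrict_space1[OF that])
  show "(\<lambda>\<omega>. \<omega>) \<in> measurable a borel"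
    unfolding measurable_cong_sets[OF s refl] by (rule measurable_restrict_space1) simp
qed

lemma joint_meas:
  fixes v :: "real^'n \<Rightarrow> real"
  assumes a: "spectral_measure a" and v: "v \<in> borel_measurable borel"
  shows "(\<lambda>p. v (x + fst p *\<^sub>R snd p)) \<in> borel_measurable (lborel \<Otimes>\<^sub>M a)"
    "(\<lambda>p. v (x - fst p *\<^sub>R snd p)) \<in> borel_measurable (lborel \<Otimes>\<^sub>M a)"
proof -
  have ida[measurable]: "(\<lambda>\<omega>. \<omega>) \<in> measurable a borel" by (rule spectral_basic(5)[OF a])
  have sn: "snd \<in> measurable (lborel \<Otimes>\<^sub>M a) borel"
    by (rule measurable_compose[OF measurable_snd ida])
  have fs: "fst \<in> borel_measurable (lborel \<Otimes>\<^sub>M a)"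
    using measurable_fst[of lborel a] by simp
  have m: "(\<lambda>p. fst p *\<^sub>R snd p) \<in> measurable (lborel \<Otimes>\<^sub>M a) borel"
    using fs sn by (rule borel_measurable_scaleR)
  show "(\<lambda>p. v (x + fst p *\<^sub>R snd p)) \<in> borel_measurable (lborel \<Otimes>\<^sub>M a)"
    using m v by measurable
  show "(\<lambda>p. v (x - fst p *\<^sub>R snd p)) \<in> borel_measurable (lborel \<Otimes>\<^sub>M a)"
    using m v by measurable
qed


lemma kq_le:
  fixes r s \<rho> :: real assumes r: "0 < r" "r < \<rho>" and s: "0 < s" "s < 1"
  shows "1 / \<rho> powr (1 + 2 * s) \<le> 1 / ((\<rho>\<^sup>2 - r\<^sup>2) powr s * \<rho>)"
proof -
  have x0: "\<rho> > 0" "\<rho>\<^sup>2 - r\<^sup>2 > 0" using r by (auto simp: power2_eq_square mult_strict_mono)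
  have "(\<rho>\<^sup>2 - r\<^sup>2) powr s \<le> (\<rho>\<^sup>2) powr s" using x0 s by (intro powr_mono2) auto
  also have "(\<rho>\<^sup>2) powr s = \<rho> powr (2 * s)"
  proof -
    have "(\<rho>\<^sup>2) = \<rho> powr 2" using x0 by (simp add: powr_realpow)
    thus ?thesis by (simp add: powr_powr)
  qed
  finally have "(\<rho>\<^sup>2 - r\<^sup>2) powr s * \<rho> \<le> \<rho> powr (1 + 2 * s)"
    using x0 by (simp add: powr_add mult.commute)
  thus ?thesis using x0 by (intro divide_left_mono) auto
qed

lemma expansion:
  fixes a :: "(real^'n) measure" and v :: "real^'n \<Rightarrow> real" and x :: "real^'n"
  assumes s: "0 < s" "s < 1" and a: "spectral_measure a" and vm: "v \<in> borel_measurable borel"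
    and B: "\<And>y. \<bar>v y\<bar> \<le> B" and K: "\<And>y. \<bar>delta v x y\<bar> \<le> K * (norm y)\<^sup>2" and K0: "0 \<le> K"
  shows "\<exists>E. \<forall>r>0. \<bar>v x - Mop a s r v x - cnst a s * r powr (2 * s) * Lop a s v x\<bar> \<le> E * r\<^sup>2"
proof -
  interpret fm: finite_measure a using spectral_basic(1)[OF a] .
  define m where "m = measure a (space a)"
  have m0: "0 < m" using spectral_basic(3)[OF a] unfolding m_def .
  have sp: "space a = sphere 0 1" by (rule spectral_basic(2)[OF a])
  have hm: "h \<in> borel_measurable a" if "h \<in> borel_measurable borel" for h :: "real^'n \<Rightarrow> real"
    using spectral_basic(4)[OF a that] .
  define F where "F \<rho> = (\<integral>\<omega>. delta v x (\<rho> *\<^sub>R \<omega>) \<partial>a)" for \<rho> :: real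
  define G where "G \<rho> = (\<integral>\<omega>. (v (x + \<rho> *\<^sub>R \<omega>) + v (x - \<rho> *\<^sub>R \<omega>)) \<partial>a)" for \<rho> :: real
  have B0: "0 \<le> B" using B[of x] by linarith
  have dB: "\<bar>delta v x y\<bar> \<le> 4 * B" for y
    using B[of x] B[of "x - y"] B[of "x + y"] unfolding delta_def by linarith
  have md: "(\<lambda>\<omega>. delta v x (\<rho> *\<^sub>R \<omega>)) \<in> borel_measurable a" for \<rho>
    by (rule hm) (unfold delta_def, use vm in measurable)
  have mp: "(\<lambda>\<omega>. v (x + \<rho> *\<^sub>R \<omega>) + v (x - \<rho> *\<^sub>R \<omega>)) \<in> borel_measurable a" for \<rho>
    by (rule hm) (use vm in measurable)
  have id: "integrable a (\<lambda>\<omega>. delta v x (\<rho> *\<^sub>R \<omega>))" for \<rho>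
    by (rule fm.integrable_const_bound[where B = "4 * B"]) (use dB md in auto)
  have ic: "integrable a (\<lambda>\<omega>. c)" for c :: real by simp
  have FG: "G \<rho> = 2 * m * v x - F \<rho>" for \<rho>
  proof -
    have "G \<rho> = (\<integral>\<omega>. (2 * v x) - delta v x (\<rho> *\<^sub>R \<omega>) \<partial>a)"
      unfolding G_def delta_def by (simp add: algebra_simps)
    also have "\<dots> = (\<integral>\<omega>. 2 * v x \<partial>a) - F \<rho>"
      unfolding F_def by (rule Bochner_Integration.integral_diff[OF ic id])
    finally show ?thesis by (simp add: m_def)
  qed
  have FK: "\<bar>F \<rho>\<bar> \<le> m * K * \<rho>\<^sup>2" for \<rho>
  proof -
    have "\<bar>F \<rho>\<bar> \<le> (\<integral>\<omega>. K * \<rho>\<^sup>2 \<partial>a)"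
      unfolding F_def
    proof (rule integral_abs_bound_integral[OF id ic])
      fix \<omega> assume "\<omega> \<in> space a"
      hence "norm \<omega> = 1" using sp by simp
      thus "\<bar>delta v x (\<rho> *\<^sub>R \<omega>)\<bar> \<le> K * \<rho>\<^sup>2" using K[of "\<rho> *\<^sub>R \<omega>"] by simp
    qed
    thus ?thesis by (simp add: m_def)
  qed
  have FB: "\<bar>F \<rho>\<bar> \<le> m * (4 * B)" for \<rho>
  proof -
    have "\<bar>F \<rho>\<bar> \<le> (\<integral>\<omega>. 4 * B \<partial>a)"
      unfolding F_def by (rule integral_abs_bound_integral[OF id ic]) (use dB in auto)
    thus ?thesis by (simp add: m_def)
  qed
  have Fm: "F \<in> borel_measurable lborel"
  proof -

    have jm: "(\<lambda>p. delta v x (fst p *\<^sub>R snd p)) \<in> borel_measurable (lborel \<Otimes>\<^sub>M a)"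
      unfolding delta_def using joint_meas[OF a vm, of x] by measurable
    have "(\<lambda>\<rho>. \<integral>\<omega>. delta v x (\<rho> *\<^sub>R \<omega>) \<partial>a) \<in> borel_measurable lborel"
      by (rule fm.borel_measurable_lebesgue_integral) (use jm in \<open>simp add: case_prod_beta'\<close>)
    thus ?thesis unfolding F_def .
  qed
  have Lop_eq: "Lop a s v x = (LINT \<rho>:{0<..}|lborel. F \<rho> * (1 / \<rho> powr (1 + 2 * s)))"
    unfolding Lop_def F_def by simp
  have Mop_eq: "Mop a s r v x = cnst a s * r powr (2 * s) * (LINT \<rho>:{r<..}|lborel. G \<rho> * (1 / ((\<rho>\<^sup>2 - r\<^sup>2) powr s * \<rho>)))" for r
    unfolding Mop_def G_def by simp
  define c where "c = cnst a s"
  have c0: "0 \<le> c" unfolding c_def cnst_def using s m0 m_def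
    by (intro divide_nonneg_nonneg sin_ge_zero) (auto simp: mult_le_cancel_left1)
  have sinpos: "sin (pi * s) > 0" using s by (intro sin_gt_zero) auto
  have main: "\<bar>v x - Mop a s r v x - c * r powr (2 * s) * Lop a s v x\<bar> \<le> (c * m * K / (1 - s)) * r\<^sup>2"
    if r: "0 < r" for r
  proof -
    define k where "k \<rho> = 1 / ((\<rho>\<^sup>2 - r\<^sup>2) powr s * \<rho>)" for \<rho> :: real
    define q where "q \<rho> = 1 / \<rho> powr (1 + 2 * s)" for \<rho> :: real
    note K1r = K1[OF r s, folded k_def]
    note K2r = K2[OF r s, folded k_def q_def]
    note K3r = K3[OF r s, folded q_def]
    have kq: "q \<rho> \<le> k \<rho>" if "r < \<rho>" for \<rho> unfolding k_def q_def using kq_le[OF r that s] .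
    have k0: "0 \<le> k \<rho>" if "r < \<rho>" for \<rho> using that r unfolding k_def by simp
    have q0: "0 \<le> q \<rho>" for \<rho> unfolding q_def by simp
    have km: "k \<in> borel_measurable lborel" unfolding k_def by measurable
    have qm: "q \<in> borel_measurable lborel" unfolding q_def by measurable
    have sbm: "set_borel_measurable lborel A (\<lambda>\<rho>. F \<rho> * h \<rho>)" if "h \<in> borel_measurable lborel" "A \<in> sets borel" for A h
      unfolding set_borel_measurable_def using Fm that by measurable
    have J1: "set_integrable lborel {r<..} (\<lambda>\<rho>. F \<rho> * k \<rho>)"
    proof (rule set_integrable_bound[OF _ sbm[OF km]])
      show "set_integrable lborel {r<..} (\<lambda>\<rho>. (m * (4 * B)) * k \<rho>)" using K1r(1) by simp
      show "AE \<rho> in lborel. \<rho> \<in> {r<..} \<longrightarrow> norm (F \<rho> * k \<rho>) \<le> norm (m * (4 * B) * k \<rho>)"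
        using FB k0 m0 B0 by (auto intro!: AE_I2 simp: abs_mult intro!: mult_right_mono)
    qed simp
    have J2: "set_integrable lborel {r<..} (\<lambda>\<rho>. F \<rho> * (k \<rho> - q \<rho>))"
    proof (rule set_integrable_bound[OF _ sbm])
      show "set_integrable lborel {r<..} (\<lambda>\<rho>. (m * K) * (\<rho>\<^sup>2 * (k \<rho> - q \<rho>)))" using K2r(1) by simp
      show "AE \<rho> in lborel. \<rho> \<in> {r<..} \<longrightarrow> norm (F \<rho> * (k \<rho> - q \<rho>)) \<le> norm (m * K * (\<rho>\<^sup>2 * (k \<rho> - q \<rho>)))"
      proof (intro AE_I2 impI)
        fix \<rho> :: real assume "\<rho> \<in> {r<..}"
        hence d: "0 \<le> k \<rho> - q \<rho>" using kq by auto
        have "\<bar>F \<rho>\<bar> * (k \<rho> - q \<rho>) \<le> (m * K * \<rho>\<^sup>2) * (k \<rho> - q \<rho>)" using FK d by (rule mult_right_mono)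
        thus "norm (F \<rho> * (k \<rho> - q \<rho>)) \<le> norm (m * K * (\<rho>\<^sup>2 * (k \<rho> - q \<rho>)))"
          using d m0 K0 by (simp add: abs_mult mult_ac)
      qed
    qed (use km qm in auto)
    have J4: "set_integrable lborel {0<..r} (\<lambda>\<rho>. F \<rho> * q \<rho>)"
    proof (rule set_integrable_bound[OF _ sbm[OF qm]])
      show "set_integrable lborel {0<..r} (\<lambda>\<rho>. (m * K) * (\<rho>\<^sup>2 * q \<rho>))" using K3r(1) by simp
      show "AE \<rho> in lborel. \<rho> \<in> {0<..r} \<longrightarrow> norm (F \<rho> * q \<rho>) \<le> norm (m * K * (\<rho>\<^sup>2 * q \<rho>))"
      proof (intro AE_I2 impI)
        fix \<rho> :: real
        have "\<bar>F \<rho>\<bar> * q \<rho> \<le> (m * K * \<rho>\<^sup>2) * q \<rho>" using FK q0 by (rule mult_right_mono)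
        thus "norm (F \<rho> * q \<rho>) \<le> norm (m * K * (\<rho>\<^sup>2 * q \<rho>))"
          using q0 m0 K0 by (simp add: abs_mult mult_ac)
      qed
    qed simp
    have J3': "set_integrable lborel {r<..} (\<lambda>\<rho>. F \<rho> * k \<rho> - F \<rho> * (k \<rho> - q \<rho>))"
      by (rule set_integral_diff(1)[OF J1 J2])
    have J3: "set_integrable lborel {r<..} (\<lambda>\<rho>. F \<rho> * q \<rho>)"
      using J3' by (simp add: algebra_simps)
    define P where "P = (LINT \<rho>:{r<..}|lborel. F \<rho> * (k \<rho> - q \<rho>))"
    define Q where "Q = (LINT \<rho>:{0<..r}|lborel. F \<rho> * q \<rho>)"
    define R where "R = (LINT \<rho>:{r<..}|lborel. F \<rho> * q \<rho>)"
    define S where "S = (LINT \<rho>:{r<..}|lborel. F \<rho> * k \<rho>)"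
    define Ik where "Ik = (LINT \<rho>:{r<..}|lborel. k \<rho>)"
    have LQR: "Lop a s v x = Q + R"
    proof -
      have "{0<..} = {0<..r} \<union> {r<..}" using r by auto
      hence "Lop a s v x = (LINT \<rho>:({0<..r} \<union> {r<..})|lborel. F \<rho> * q \<rho>)"
        unfolding Lop_eq q_def by simp
      also have "\<dots> = Q + R" unfolding Q_def R_def
        by (rule set_integral_Un[OF _ J4 J3]) auto
      finally show ?thesis .
    qed
    have PSR: "P = S - R"
    proof -
      have "P = (LINT \<rho>:{r<..}|lborel. F \<rho> * k \<rho> - F \<rho> * q \<rho>)"
        unfolding P_def by (simp add: algebra_simps)
      also have "\<dots> = S - R" unfolding S_def R_def by (rule set_integral_diff(2)[OF J1 J3])
      finally show ?thesis .
    qed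
    have Mop2: "Mop a s r v x = c * r powr (2 * s) * (2 * m * v x * Ik - S)"
    proof -
      have i1: "set_integrable lborel {r<..} (\<lambda>\<rho>. (2 * m * v x) * k \<rho>)" using K1r(1) by simp
      have "(LINT \<rho>:{r<..}|lborel. G \<rho> * (1 / ((\<rho>\<^sup>2 - r\<^sup>2) powr s * \<rho>)))
          = (LINT \<rho>:{r<..}|lborel. (2 * m * v x) * k \<rho> - F \<rho> * k \<rho>)"
        unfolding FG k_def by (simp add: algebra_simps diff_divide_distrib)
      also have "\<dots> = (LINT \<rho>:{r<..}|lborel. (2 * m * v x) * k \<rho>) - S"
        unfolding S_def by (rule set_integral_diff(2)[OF i1 J1])
      also have "(LINT \<rho>:{r<..}|lborel. (2 * m * v x) * k \<rho>) = 2 * m * v x * Ik"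
        unfolding Ik_def by simp
      finally show ?thesis unfolding Mop_eq c_def by simp
    qed
    have one: "c * r powr (2 * s) * (2 * m * Ik) = 1"
    proof -
      have "Ik = r powr (- 2 * s) * pi / (2 * sin (pi * s))" unfolding Ik_def by (rule K1r(2))
      moreover have "r powr (2 * s) * r powr (- 2 * s) = 1" using r by (simp add: powr_add[symmetric])
      ultimately have "c * r powr (2 * s) * (2 * m * Ik) = (r powr (2 * s) * r powr (- 2 * s)) * (c * (2 * m * (pi / (2 * sin (pi * s)))))"
        by (simp add: mult_ac)
      also have "\<dots> = c * (2 * m * (pi / (2 * sin (pi * s))))" using r by (simp add: powr_add[symmetric])
      also have "\<dots> = 1" unfolding c_def cnst_def m_def[symmetric] using m0 sinpos by (simp add: field_simps)
      finally show ?thesis .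
    qed
    define X where "X = r powr (2 - 2 * s)"
    have X0: "0 \<le> X" unfolding X_def by simp
    have rX: "r powr (2 * s) * X = r\<^sup>2"
      unfolding X_def using r by (simp add: powr_add[symmetric] powr_realpow)
    have Pb: "\<bar>P\<bar> \<le> m * K * (X / (2 * (1 - s)))"
    proof -
      have i: "set_integrable lborel {r<..} (\<lambda>\<rho>. (m * K) * (\<rho>\<^sup>2 * (k \<rho> - q \<rho>)))" using K2r(1) by simp
      have i': "set_integrable lborel {r<..} (\<lambda>\<rho>. (- (m * K)) * (\<rho>\<^sup>2 * (k \<rho> - q \<rho>)))" by (rule set_integrable_mult_right[OF K2r(1)])
      have v: "(LINT \<rho>:{r<..}|lborel. (m * K) * (\<rho>\<^sup>2 * (k \<rho> - q \<rho>))) = m * K * (X / (2 * (1 - s)))"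
        using K2r(2) unfolding X_def by simp
      have pw: "\<bar>F \<rho> * (k \<rho> - q \<rho>)\<bar> \<le> (m * K) * (\<rho>\<^sup>2 * (k \<rho> - q \<rho>))" if "\<rho> \<in> {r<..}" for \<rho>
      proof -
        have d: "0 \<le> k \<rho> - q \<rho>" using kq that by auto
        have "\<bar>F \<rho>\<bar> * (k \<rho> - q \<rho>) \<le> (m * K * \<rho>\<^sup>2) * (k \<rho> - q \<rho>)" using FK d by (rule mult_right_mono)
        thus ?thesis using d by (simp add: abs_mult mult_ac)
      qed
      have "P \<le> m * K * (X / (2 * (1 - s)))"
        unfolding P_def v[symmetric] by (rule set_integral_mono[OF J2 i]) (use pw in force)
      moreover have "- (m * K * (X / (2 * (1 - s)))) \<le> P"
      proof -
        have "(LINT \<rho>:{r<..}|lborel. (- (m * K)) * (\<rho>\<^sup>2 * (k \<rho> - q \<rho>))) \<le> P"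
          unfolding P_def by (rule set_integral_mono[OF i' J2]) (use pw in force)
        moreover have "(LINT \<rho>:{r<..}|lborel. (- (m * K)) * (\<rho>\<^sup>2 * (k \<rho> - q \<rho>))) = (- (m * K)) * (X / (2 * (1 - s)))"
          by (simp only: set_integral_mult_right K2r(2) X_def)
        ultimately show ?thesis by simp
      qed
      ultimately show ?thesis by linarith
    qed
    have Qb: "\<bar>Q\<bar> \<le> m * K * (X / (2 - 2 * s))"
    proof -
      have i: "set_integrable lborel {0<..r} (\<lambda>\<rho>. (m * K) * (\<rho>\<^sup>2 * q \<rho>))" using K3r(1) by simp
      have i': "set_integrable lborel {0<..r} (\<lambda>\<rho>. (- (m * K)) * (\<rho>\<^sup>2 * q \<rho>))" by (rule set_integrable_mult_right[OF K3r(1)])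
      have v: "(LINT \<rho>:{0<..r}|lborel. (m * K) * (\<rho>\<^sup>2 * q \<rho>)) = m * K * (X / (2 - 2 * s))"
        using K3r(2) unfolding X_def by simp
      have pw: "\<bar>F \<rho> * q \<rho>\<bar> \<le> (m * K) * (\<rho>\<^sup>2 * q \<rho>)" for \<rho>
      proof -
        have "\<bar>F \<rho>\<bar> * q \<rho> \<le> (m * K * \<rho>\<^sup>2) * q \<rho>" using FK q0 by (rule mult_right_mono)
        thus ?thesis using q0 by (simp add: abs_mult mult_ac)
      qed
      have "Q \<le> m * K * (X / (2 - 2 * s))"
        unfolding Q_def v[symmetric] by (rule set_integral_mono[OF J4 i]) (use pw in \<open>auto simp: abs_le_iff\<close>)
      moreover have "- (m * K * (X / (2 - 2 * s))) \<le> Q"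
      proof -
        have "(LINT \<rho>:{0<..r}|lborel. (- (m * K)) * (\<rho>\<^sup>2 * q \<rho>)) \<le> Q"
          unfolding Q_def by (rule set_integral_mono[OF i' J4]) (metis pw abs_le_iff minus_le_iff mult_minus_left)
        moreover have "(LINT \<rho>:{0<..r}|lborel. (- (m * K)) * (\<rho>\<^sup>2 * q \<rho>)) = (- (m * K)) * (X / (2 - 2 * s))"
          by (simp only: set_integral_mult_right K3r(2) X_def)
        ultimately show ?thesis by simp
      qed
      ultimately show ?thesis by linarith
    qed
    define T where "T = c * r powr (2 * s)"
    have T0: "0 \<le> T" unfolding T_def using c0 by simp
    have eq: "v x - Mop a s r v x - c * r powr (2 * s) * Lop a s v x = T * (P - Q)"
    proof -
      have "v x = T * (2 * m * Ik) * v x" using one unfolding T_def by simp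
      thus ?thesis unfolding Mop2 LQR PSR T_def[symmetric] by (simp add: algebra_simps)
    qed
    have "\<bar>T * (P - Q)\<bar> \<le> T * (\<bar>P\<bar> + \<bar>Q\<bar>)" using T0 by (simp add: abs_mult mult_left_mono)
    also have "\<dots> \<le> T * (m * K * (X / (2 * (1 - s))) + m * K * (X / (2 - 2 * s)))"
      using Pb Qb T0 by (intro mult_left_mono add_mono) auto
    also have "m * K * (X / (2 * (1 - s))) + m * K * (X / (2 - 2 * s)) = m * K * X / (1 - s)"
    proof -
      define d where "d = 1 - s"
      have d0: "d \<noteq> 0" using s by (simp add: d_def)
      have h: "2 - 2 * s = 2 * d" by (simp add: d_def)
      show ?thesis unfolding h d_def[symmetric] using d0 by (simp add: field_simps)
    qed
    also have "T * (m * K * X / (1 - s)) = (c * m * K / (1 - s)) * (r powr (2 * s) * X)"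
      unfolding T_def by (simp add: field_simps)
    also have "\<dots> = (c * m * K / (1 - s)) * r\<^sup>2" by (simp add: rX)
    finally show ?thesis using eq by simp
  qed
  show ?thesis using main unfolding c_def by blast
qed

lemma test_facts:
  fixes u \<phi> :: "real^'n \<Rightarrow> real"
  assumes td: "test_data \<Omega> x U \<phi>" and lu: "Linfty u"
  shows "touch U \<phi> u \<in> borel_measurable borel"
    "\<exists>B. \<forall>y. \<bar>touch U \<phi> u y\<bar> \<le> B"
    "\<exists>K\<ge>0. \<forall>y. \<bar>delta (touch U \<phi> u) x y\<bar> \<le> K * (norm y)\<^sup>2"
proof -
  have oU: "open U" and bU: "bounded U" and xU: "x \<in> U" and C2: "C2_on (closure U) \<phi>"
    using td unfolding test_data_def by auto
  have um: "u \<in> borel_measurable borel" and ub: "bounded (range u)" using lu unfolding Linfty_def by auto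
  have cphi: "continuous_on (closure U) \<phi>"
  proof -
    obtain D :: "real^'n \<Rightarrow> ((real^'n) \<Rightarrow>\<^sub>L real)"
      where "\<forall>y\<in>closure U. (\<phi> has_derivative blinfun_apply (D y)) (at y within closure U)"
      using C2 unfolding C2_on_def by blast
    thus ?thesis by (intro has_derivative_continuous_on) auto
  qed
  have v_eq: "touch U \<phi> u = (\<lambda>y. indicator U y *\<^sub>R \<phi> y + (1 - indicator U y) * u y)"
    unfolding touch_def by (auto simp: indicator_def)
  have m1: "(\<lambda>y. indicator U y *\<^sub>R \<phi> y) \<in> borel_measurable borel"
    by (rule borel_measurable_continuous_on_indicator) (use oU continuous_on_subset[OF cphi closure_subset] in auto)
  show vm: "touch U \<phi> u \<in> borel_measurable borel"
  proof -
    have [measurable]: "U \<in> sets borel" using oU by simp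
    note [measurable] = um m1
    show ?thesis unfolding v_eq by measurable
  qed
  obtain B1 where B1: "\<And>y. \<bar>u y\<bar> \<le> B1" using ub unfolding bounded_iff by auto
  have "compact (\<phi> ` closure U)" using bU cphi by (intro compact_continuous_image) auto
  hence "bounded (\<phi> ` closure U)" by (rule compact_imp_bounded)
  then obtain B2 where "\<forall>z\<in>\<phi> ` closure U. norm z \<le> B2" unfolding bounded_iff by blast
  hence B2: "\<And>y. y \<in> closure U \<Longrightarrow> \<bar>\<phi> y\<bar> \<le> B2" by auto
  have vb: "\<bar>touch U \<phi> u y\<bar> \<le> max B1 B2" for y
    using B1[of y] B2[of y] closure_subset[of U] unfolding touch_def by (auto split: if_splits)
  thus "\<exists>B. \<forall>y. \<bar>touch U \<phi> u y\<bar> \<le> B" by blast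
  define B where "B = max B1 B2"
  have B0: "0 \<le> B" unfolding B_def using vb[of x] by linarith
  obtain e where e: "0 < e" "ball x e \<subseteq> U" using oU xU open_contains_ball by blast
  have sub: "cball x (e / 2) \<subseteq> interior (closure U)"
  proof -
    have "cball x (e / 2) \<subseteq> U" 
    proof -
      have "cball x (e / 2) \<subseteq> ball x e" using e by (auto simp: subset_iff)
      thus ?thesis using e by blast
    qed
    thus ?thesis using interior_maximal[OF _ oU, of "closure U"] closure_subset by blast
  qed
  obtain M where M0: "M \<ge> 0" and M: "\<And>y. norm y \<le> e / 2 \<Longrightarrow> \<bar>delta \<phi> x y\<bar> \<le> M * (norm y)\<^sup>2"
    using taylor_delta[OF C2 _ sub] e by auto
  define K where "K = max M (4 * B / (e / 2)\<^sup>2)"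
  have K0: "0 \<le> K" unfolding K_def using M0 by simp
  have "\<bar>delta (touch U \<phi> u) x y\<bar> \<le> K * (norm y)\<^sup>2" for y
  proof (cases "norm y \<le> e / 2")
    case True
    have "x + y \<in> U" "x - y \<in> U" using True e by (auto simp: dist_norm subset_iff)
    hence "delta (touch U \<phi> u) x y = delta \<phi> x y" unfolding delta_def touch_def using xU by simp
    also have "\<bar>\<dots>\<bar> \<le> M * (norm y)\<^sup>2" by (rule M[OF True])
    also have "\<dots> \<le> K * (norm y)\<^sup>2" unfolding K_def by (intro mult_right_mono) auto
    finally show ?thesis .
  next
    case False
    have "\<bar>delta (touch U \<phi> u) x y\<bar> \<le> 4 * B"
      using vb[of x] vb[of "x - y"] vb[of "x + y"] unfolding delta_def B_def by linarith
    also have "4 * B = (4 * B / (e / 2)\<^sup>2) * (e / 2)\<^sup>2" using e by simp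
    also have "\<dots> \<le> (4 * B / (e / 2)\<^sup>2) * (norm y)\<^sup>2"
      using False e B0 by (intro mult_left_mono power_mono) auto
    also have "\<dots> \<le> K * (norm y)\<^sup>2" unfolding K_def by (intro mult_right_mono) auto
    finally show ?thesis .
  qed
  thus "\<exists>K\<ge>0. \<forall>y. \<bar>delta (touch U \<phi> u) x y\<bar> \<le> K * (norm y)\<^sup>2" using K0 by blast
qed

lemma cnst_pos:
  assumes "0 < s" "s < 1" "spectral_measure a"
  shows "0 < cnst a s"
proof -
  have "sin (pi * s) > 0" using assms by (intro sin_gt_zero) auto
  moreover have "measure a (space a) > 0" using spectral_basic(3)[OF assms(3)] .
  ultimately show ?thesis unfolding cnst_def by simp
qed

lemma equiv_abstract:
  fixes Mo :: "real \<Rightarrow> real" and L c E vx :: real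
  assumes c: "0 < c" and s: "0 < s" "s < 1"
    and E: "\<And>r. 0 < r \<Longrightarrow> \<bar>vx - Mo r - c * r powr (2 * s) * L\<bar> \<le> E * r\<^sup>2"
  shows "(\<exists>C. eventually (\<lambda>r. vx \<ge> Mo r - C * r\<^sup>2) (at_right 0)) \<longleftrightarrow> L \<ge> 0"
    "(\<exists>C. eventually (\<lambda>r. vx \<le> Mo r + C * r\<^sup>2) (at_right 0)) \<longleftrightarrow> L \<le> 0"
proof -
  have split: "r\<^sup>2 = r powr (2 * s) * r powr (2 - 2 * s)" if "0 < r" for r :: real
    using that by (simp add: powr_add[symmetric] powr_realpow)
  have lim: "((\<lambda>r. c * Lv + D * r powr (2 - 2 * s)) \<longlongrightarrow> c * Lv) (at_right 0)" for D Lv :: real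
    using s by real_asymp
  show "(\<exists>C. eventually (\<lambda>r. vx \<ge> Mo r - C * r\<^sup>2) (at_right 0)) \<longleftrightarrow> L \<ge> 0"
  proof
    assume "\<exists>C. eventually (\<lambda>r. vx \<ge> Mo r - C * r\<^sup>2) (at_right 0)"
    then obtain C where C: "eventually (\<lambda>r. vx \<ge> Mo r - C * r\<^sup>2) (at_right 0)" by blast
    have "eventually (\<lambda>r. 0 \<le> c * L + (E + C) * r powr (2 - 2 * s)) (at_right 0)"
      using C eventually_at_right_less[of "0::real"]
    proof eventually_elim
      case (elim r)
      have "vx - Mo r \<le> c * r powr (2 * s) * L + E * r\<^sup>2" using E[OF elim(2)] by linarith
      hence "0 \<le> c * r powr (2 * s) * L + (E + C) * r\<^sup>2" using elim(1) by (simp add: algebra_simps)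
      also have "\<dots> = r powr (2 * s) * (c * L + (E + C) * r powr (2 - 2 * s))"
        unfolding split[OF elim(2)] by (simp add: algebra_simps)
      finally show ?case using elim(2) by (simp add: zero_le_mult_iff)
    qed
    hence "0 \<le> c * L" by (intro tendsto_lowerbound[OF lim]) auto
    thus "L \<ge> 0" using c by (simp add: zero_le_mult_iff)
  next
    assume L: "L \<ge> 0"
    have "eventually (\<lambda>r. vx \<ge> Mo r - E * r\<^sup>2) (at_right 0)"
      using eventually_at_right_less[of "0::real"]
    proof eventually_elim
      case (elim r)
      have "0 \<le> c * r powr (2 * s) * L" using c L by simp
      thus ?case using E[OF elim] by linarith
    qed
    thus "\<exists>C. eventually (\<lambda>r. vx \<ge> Mo r - C * r\<^sup>2) (at_right 0)" by blast
  qed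
  show "(\<exists>C. eventually (\<lambda>r. vx \<le> Mo r + C * r\<^sup>2) (at_right 0)) \<longleftrightarrow> L \<le> 0"
  proof
    assume "\<exists>C. eventually (\<lambda>r. vx \<le> Mo r + C * r\<^sup>2) (at_right 0)"
    then obtain C where C: "eventually (\<lambda>r. vx \<le> Mo r + C * r\<^sup>2) (at_right 0)" by blast
    have "eventually (\<lambda>r. c * (- L) + (E + C) * r powr (2 - 2 * s) \<ge> 0) (at_right 0)"
      using C eventually_at_right_less[of "0::real"]
    proof eventually_elim
      case (elim r)
      have "vx - Mo r \<ge> c * r powr (2 * s) * L - E * r\<^sup>2" using E[OF elim(2)] by linarith
      hence "0 \<le> c * r powr (2 * s) * (- L) + (E + C) * r\<^sup>2" using elim(1) by (simp add: algebra_simps)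
      also have "\<dots> = r powr (2 * s) * (c * (- L) + (E + C) * r powr (2 - 2 * s))"
        unfolding split[OF elim(2)] by (simp add: algebra_simps)
      finally show ?case using elim(2) by (simp add: zero_le_mult_iff)
    qed
    hence "0 \<le> c * (- L)" by (intro tendsto_lowerbound[OF lim[of "- L" "E + C"]]) auto
    thus "L \<le> 0" using c by (simp add: mult_le_0_iff)
  next
    assume L: "L \<le> 0"
    have "eventually (\<lambda>r. vx \<le> Mo r + E * r\<^sup>2) (at_right 0)"
      using eventually_at_right_less[of "0::real"]
    proof eventually_elim
      case (elim r)
      have "c * r powr (2 * s) * L \<le> 0" using c L by (simp add: mult_nonneg_nonpos)
      thus ?case using E[OF elim] by linarith
    qed
    thus "\<exists>C. eventually (\<lambda>r. vx \<le> Mo r + C * r\<^sup>2) (at_right 0)" by blast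
  qed
qed

lemma equiv_point:
  fixes u \<phi> :: "real^'n \<Rightarrow> real"
  assumes s: "0 < s" "s < 1" and a: "spectral_measure a"
    and td: "test_data \<Omega> x U \<phi>" and lu: "Linfty u"
  shows "(\<exists>C. eventually (\<lambda>r. touch U \<phi> u x \<ge> Mop a s r (touch U \<phi> u) x - C * r\<^sup>2) (at_right 0))
           \<longleftrightarrow> Lop a s (touch U \<phi> u) x \<ge> 0"
    "(\<exists>C. eventually (\<lambda>r. touch U \<phi> u x \<le> Mop a s r (touch U \<phi> u) x + C * r\<^sup>2) (at_right 0))
           \<longleftrightarrow> Lop a s (touch U \<phi> u) x \<le> 0"
proof -
  obtain B where B: "\<forall>y. \<bar>touch U \<phi> u y\<bar> \<le> B" using test_facts(2)[OF td lu] by blast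
  obtain K where K0: "K \<ge> 0" and K: "\<forall>y. \<bar>delta (touch U \<phi> u) x y\<bar> \<le> K * (norm y)\<^sup>2"
    using test_facts(3)[OF td lu] by blast
  obtain E where E: "\<forall>r>0. \<bar>touch U \<phi> u x - Mop a s r (touch U \<phi> u) x - cnst a s * r powr (2 * s) * Lop a s (touch U \<phi> u) x\<bar> \<le> E * r\<^sup>2"
  proof -
    have B': "\<And>y. \<bar>touch U \<phi> u y\<bar> \<le> B" using B by blast
    have K': "\<And>y. \<bar>delta (touch U \<phi> u) x y\<bar> \<le> K * (norm y)\<^sup>2" using K by blast
    show ?thesis using expansion[OF s a test_facts(1)[OF td lu] B' K' K0] that by blast
  qed
  note eq = equiv_abstract[OF cnst_pos[OF s a] s, of "touch U \<phi> u x" "\<lambda>r. Mop a s r (touch U \<phi> u) x" "Lop a s (touch U \<phi> u) x" E]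
  show "(\<exists>C. eventually (\<lambda>r. touch U \<phi> u x \<ge> Mop a s r (touch U \<phi> u) x - C * r\<^sup>2) (at_right 0))
           \<longleftrightarrow> Lop a s (touch U \<phi> u) x \<ge> 0" using eq(1) E by blast
  show "(\<exists>C. eventually (\<lambda>r. touch U \<phi> u x \<le> Mop a s r (touch U \<phi> u) x + C * r\<^sup>2) (at_right 0))
           \<longleftrightarrow> Lop a s (touch U \<phi> u) x \<le> 0" using eq(2) E by blast
qed

lemma cont_lsc_usc:
  assumes "continuous_on S (u :: 'a::topological_space \<Rightarrow> real)"
  shows "lsc_on S u" "usc_on S u"
proof -
  have t: "(u \<longlongrightarrow> u y) (at y within S)" if "y \<in> S" for y
    using assms that unfolding continuous_on_def by blast
  show "lsc_on S u" unfolding lsc_on_def using t order_tendstoD(1) by blast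
  show "usc_on S u" unfolding usc_on_def using t order_tendstoD(2) by blast
qed

theorem theorem1p1:
  fixes a :: "(real^'n) measure" and s :: real and \<Omega> :: "(real^'n) set" and u :: "real^'n \<Rightarrow> real"
  assumes "0 < s" and "s < 1"
    and "spectral_measure a"
    and "open \<Omega>"
    and "Linfty u"
    and "continuous_on (closure \<Omega>) u"
  shows "(\<forall>x\<in>\<Omega>. mv_viscosity a s \<Omega> u x) \<longleftrightarrow> visc_solution a s \<Omega> u"
proof -
  note ls = cont_lsc_usc[OF assms(6)]
  note ep = equiv_point[OF assms(1,2,3) _ assms(5)]
  show ?thesis
    unfolding mv_viscosity_def mv_above_def mv_below_def visc_solution_def visc_super_def visc_sub_def
    using ls assms(5,6) ep by blast
qed

end
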